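(* Let $\lambda$ and $g$ be as in the context. Let $b^{(1)}\in[0,c^{(1)}]$ be the point with $g(b^{(1)})=0$ and set $b^{(2)}=b^{(1)}/\lambda$. Then $g(b^{(2)})=b^{(1)}$.
   Context: There is a unique constant $\lambda=2.5029\ldots$ and a unique infinitely (period-doubling) renormalizable analytic unimodal map $g:[-1,1]\to[-1,1]$ solving $g(x)=-\lambda\, g^{2}(-x/\lambda)$ for $-1\le x\le1$ ($g^2=g\circ g$). Unimodal means: $-1$ is the unique fixed point with positive multiplier, $g(1)=-1$, and $g$ has a unique maximum at an interior nondegenerate critical point $c^{(0)}$. Moreover $g$ is analytic near $[-1,1]$, even, concave on $[-c^{(1)},c^{(1)}]$ where $c^{(1)}=g(c^{(0)})$, satisfies $g(c^{(1)})=-c^{(1)}/\lambda$, $g'(c^{(1)})=-\lambda$, and has negative Schwarzian derivative. *)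

theory Defs
  imports "HOL-Analysis.Analysis" "HOL-Complex_Analysis.Complex_Analysis"
begin

definition schwarzian :: "(real \<Rightarrow> real) \<Rightarrow> real \<Rightarrow> real" where
  "schwarzian g x = deriv (deriv (deriv g)) x / deriv g x
      - 3 / 2 * (deriv (deriv g) x / deriv g x)^2"

definition analytic_near_interval :: "(real \<Rightarrow> real) \<Rightarrow> bool" where
  "analytic_near_interval g \<longleftrightarrow>
     (\<exists>S G. open S \<and> complex_of_real ` {-1..1} \<subseteq> S \<and> G holomorphic_on S \<and>
        (\<forall>x. complex_of_real x \<in> S \<longrightarrow> G (complex_of_real x) = complex_of_real (g x)))"

definition unimodal :: "(real \<Rightarrow> real) \<Rightarrow> real \<Rightarrow> bool" where
  "unimodal g c0 \<longleftrightarrow>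
     g (-1) = -1 \<and> deriv g (-1) > 0 \<and>
     (\<forall>x\<in>{-1..1}. g x = x \<and> deriv g x > 0 \<longrightarrow> x = -1) \<and>
     g 1 = -1 \<and>
     c0 \<in> {-1<..<1} \<and> (\<forall>x\<in>{-1..1}. x \<noteq> c0 \<longrightarrow> g x < g c0) \<and>
     deriv g c0 = 0 \<and> deriv (deriv g) c0 \<noteq> 0"

definition feigenbaum_fixed_point :: "real \<Rightarrow> (real \<Rightarrow> real) \<Rightarrow> real \<Rightarrow> bool" where
  "feigenbaum_fixed_point lam g c0 \<longleftrightarrow>
     2.5029 \<le> lam \<and> lam < 2.503 \<and>
     g ` {-1..1} \<subseteq> {-1..1} \<and>
     (\<forall>x\<in>{-1..1}. g x = - lam * g (g (- x / lam))) \<and>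
     unimodal g c0 \<and>
     analytic_near_interval g \<and>
     (\<forall>x\<in>{-1..1}. g (- x) = g x) \<and>
     concave_on {- g c0 .. g c0} g \<and>
     g (g c0) = - g c0 / lam \<and>
     deriv g (g c0) = - lam \<and>
     (\<forall>x\<in>{-1..1}. x \<noteq> c0 \<longrightarrow> schwarzian g x < 0)"

end

theory Submission
  imports Defs
begin

lemma conc_pos:
  fixes g :: "real \<Rightarrow> real" and c x z :: real
  assumes conc: "concave_on {-c..c} g" and c: "g 0 = c" "c > 0"
    and x: "0 \<le> x" "x < z" "z \<le> c" and gz: "g z \<ge> 0"
  shows "g x > 0"
proof -
  define t where "t = x / z"
  have z0: "z > 0" using x by linarith
  have t0: "t \<ge> 0" "t \<le> 1" "t < 1" using x z0 by (auto simp: t_def field_simps)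
  have "g ((1 - t) *\<^sub>R 0 + t *\<^sub>R z) \<ge> (1 - t) * g 0 + t * g z"
    by (rule concave_onD[OF conc]) (use t0 x c in auto)
  moreover have "(1 - t) *\<^sub>R 0 + t *\<^sub>R z = x" using z0 by (simp add: t_def)
  moreover have "(1 - t) * g 0 + t * g z > 0"
    using t0 c gz by (simp add: add_pos_nonneg)
  ultimately show ?thesis by (metis less_le_trans)
qed

theorem mainTheorem4:
  fixes lam :: real and g :: "real \<Rightarrow> real" and c0 b1 :: real
  assumes "feigenbaum_fixed_point lam g c0"
    and "b1 \<in> {0 .. g c0}"
    and "g b1 = 0"
  shows "g (b1 / lam) = b1"
proof -
  note F = assms(1)[unfolded feigenbaum_fixed_point_def unimodal_def]
  have "2.5029 \<le> lam" using F by blast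
  hence lam: "lam > 1" by simp
  have fe: "\<And>x. x \<in> {-1..1} \<Longrightarrow> g x = - lam * g (g (- x / lam))" using F by blast
  have ev: "\<And>x. x \<in> {-1..1} \<Longrightarrow> g (- x) = g x" using F by blast
  have mx: "\<And>x. x \<in> {-1..1} \<Longrightarrow> x \<noteq> c0 \<Longrightarrow> g x < g c0" using F by blast
  have "c0 \<in> {-1<..<1}" using F by blast
  hence c0in: "c0 \<in> {-1..1}" by auto
  have im: "g ` {-1..1} \<subseteq> {-1..1}" using F by blast
  have c00: "c0 = 0"
  proof (rule ccontr)
    assume "c0 \<noteq> 0"
    hence "-c0 \<noteq> c0" by linarith
    moreover have "-c0 \<in> {-1..1}" using c0in by auto
    ultimately have "g (-c0) < g c0" using mx by blast
    thus False using ev[OF c0in] by simp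
  qed
  define c where "c = g 0"
  have "concave_on {- g c0..g c0} g" using F by blast
  hence conc: "concave_on {-c..c} g" using c00 c_def by simp
  have "g c0 \<in> {-1..1}" using im c0in by blast
  hence c1: "c \<le> 1" using c00 c_def by simp
  show ?thesis
  proof (cases "c > 0")
    case False
    hence "b1 = 0" using assms(2) c00 c_def by auto
    thus ?thesis using assms(3) by simp
  next
    case True
    have b1: "0 \<le> b1" "b1 \<le> c" using assms(2) c00 c_def by auto
    have b1pos: "b1 > 0"
    proof (rule ccontr)
      assume "\<not> b1 > 0" hence "b1 = 0" using b1 by linarith
      thus False using assms(3) True c_def by simp
    qed
    have b1in: "b1 \<in> {-1..1}" using b1 c1 by auto
    have "g (-b1) = - lam * g (g (b1 / lam))" using fe[of "-b1"] b1in by simp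
    hence gg: "g (g (b1 / lam)) = 0" using ev[OF b1in] assms(3) lam by simp
    define y where "y = g (b1 / lam)"
    have xl: "0 \<le> b1 / lam" "b1 / lam < b1" using b1pos lam by (auto simp: field_simps)
    have "y > 0" unfolding y_def
      by (rule conc_pos[OF conc c_def[symmetric] True xl]) (use b1 assms(3) in auto)
    have xin: "b1 / lam \<in> {-1..1}" using xl b1in by auto
    have "y \<le> c"
    proof (cases "b1 / lam = 0")
      case True thus ?thesis unfolding y_def c_def by (metis order_refl)
    next
      case False thus ?thesis using mx[OF xin] c00 y_def c_def by force
    qed
    have gy: "g y = 0" using gg y_def by simp
    show ?thesis unfolding y_def[symmetric]
    proof (rule ccontr)
      assume ne: "y \<noteq> b1"
      show False
      proof (cases "y < b1")
        case True
        have "g y > 0" by (rule conc_pos[OF conc c_def[symmetric]]) (use \<open>c > 0\<close> \<open>y > 0\<close> True b1 assms(3) in auto)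
        thus False using gy by simp
      next
        case False
        hence "b1 < y" using ne by linarith
        have "g b1 > 0" by (rule conc_pos[OF conc c_def[symmetric]]) (use \<open>c > 0\<close> \<open>y > 0\<close> \<open>b1 < y\<close> \<open>y \<le> c\<close> b1 gy in auto)
        thus False using assms(3) by simp
      qed
    qed
  qed
qed

end
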